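(* Let $X$ be a compact metric space with metric $d$, let $f\colon X\to X$ be a continuous map with the s-limit shadowing property, let $C\in\mathcal{C}(f)$ and $D\in\mathcal{D}(C)$, and let $\mathcal{G}$ be a full Furstenberg family. Then for every $n\ge2$, the set \[ B=\bigcap_{\epsilon>0}\{(x_1,\dots,x_n)\in[V^s(D)]^n\colon T_f(x_1,\dots,x_n;\epsilon)\in\mathcal{G}\} \] is a dense subset of $[V^s(D)]^n$.
   Context: A $\delta$-chain of $f$ ($\delta>0$) is a finite sequence $(x_i)_{i=0}^k$, $k\ge1$, of points of $X$ with $d(f(x_i),x_{i+1})\le\delta$ for $0\le i\le k-1$; it is a $\delta$-cycle if $x_0=x_k$, and $k$ is its length. Write $x\to y$ if for every $\delta>0$ there is a $\delta$-chain from $x$ to $y$. Let $CR(f)=\{x\in X\colon x\to x\}$; on $CR(f)$ let $x\leftrightarrow y$ iff $x\to y$ and $y\to x$. The equivalence classes of $\leftrightarrow$ are the chain components; $\mathcal{C}(f)$ is the set of chain components. For $C\in\mathcal{C}(f)$ and $\delta>0$, let $m=m(C,\delta)$ be the greatest common divisor of the lengths of all $\delta$-cycles of $f|_C$ (chains consisting of points of $C$), and for $x,y\in C$ let $x\sim_{C,\delta}y$ iff there is a $\delta$-chain $(x_i)_{i=0}^k$ of $f|_C$ with $x_0=x$, $x_k=y$ and $m\mid k$; this is an equivalence relation on $C$, and $\mathcal{D}(C,\delta)$ denotes its (finitely many) equivalence classes. Let $x\sim_C y$ iff $x\sim_{C,\delta}y$ for all $\delta>0$, and let $\mathcal{D}(C)$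 be the set of equivalence classes of $\sim_C$. For $D\in\mathcal{D}(C)$ and $\delta>0$, let $D_\delta$ be the unique element of $\mathcal{D}(C,\delta)$ containing $D$. Define $W^s(C)=\{x\in X\colon\lim_{i\to\infty}d(f^i(x),C)=0\}$ and \[ V^s(D)=\bigcap_{\delta>0}\{x\in W^s(C)\colon\lim_{i\to\infty}d(f^i(x),f^i(D_\delta))=0\}, \] where $d(p,A)=\inf_{a\in A}d(p,a)$. A sequence $(x_i)_{i\ge0}$ is a $\delta$-limit-pseudo orbit if $d(f(x_i),x_{i+1})\le\delta$ for all $i$ and $d(f(x_i),x_{i+1})\to0$; it is $\epsilon$-limit shadowed by $x$ if $d(f^i(x),x_i)\le\epsilon$ for all $i\ge0$ and $d(f^i(x),x_i)\to0$. $f$ has the s-limit shadowing property if for every $\epsilon>0$ there is $\delta>0$ such that every $\delta$-limit-pseudo orbit of $f$ is $\epsilon$-limit shadowed by some point of $X$. A Furstenberg family is a nonempty proper family $\mathcal{F}\subsetneq 2^{\mathbb{N}_0}$ ($\mathbb{N}_0=\{0,1,2,\dots\}$) that is hereditary upward ($A\in\mathcal{F}$, $A\subset B$ implies $B\in\mathcal{F}$). It is full if $\{i\in A\colon i\ge n\}\in\mathcal{F}$ for all $A\in\mathcal{F}$ and $n\ge0$. For $x_1,\dots,x_n\in X$ and $r>0$, $T_f(x_1,\dots,x_n;r)=\{i\in\mathbb{N}_0\colon\max_{1\le j<k\le n}d(f^i(x_j),f^i(x_k))<r\}$. *)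

theory Defs
  imports "HOL-Analysis.Analysis"
begin

definition is_chain :: "('a::metric_space \<Rightarrow> 'a) \<Rightarrow> real \<Rightarrow> (nat \<Rightarrow> 'a) \<Rightarrow> nat \<Rightarrow> bool" where
  "is_chain f \<delta> xi k \<longleftrightarrow> k \<ge> 1 \<and> (\<forall>i<k. dist (f (xi i)) (xi (Suc i)) \<le> \<delta>)"

definition chain_to :: "('a::metric_space \<Rightarrow> 'a) \<Rightarrow> 'a \<Rightarrow> 'a \<Rightarrow> bool" where
  "chain_to f x y \<longleftrightarrow> (\<forall>\<delta>>0. \<exists>xi k. is_chain f \<delta> xi k \<and> xi 0 = x \<and> xi k = y)"

definition CR :: "('a::metric_space \<Rightarrow> 'a) \<Rightarrow> 'a set" where
  "CR f = {x. chain_to f x x}"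

definition chain_components :: "('a::metric_space \<Rightarrow> 'a) \<Rightarrow> 'a set set" where
  "chain_components f = {C. \<exists>x\<in>CR f. C = {y\<in>CR f. chain_to f x y \<and> chain_to f y x}}"

definition chain_in :: "('a::metric_space \<Rightarrow> 'a) \<Rightarrow> 'a set \<Rightarrow> real \<Rightarrow> (nat \<Rightarrow> 'a) \<Rightarrow> nat \<Rightarrow> bool" where
  "chain_in f C \<delta> xi k \<longleftrightarrow> is_chain f \<delta> xi k \<and> (\<forall>i\<le>k. xi i \<in> C)"

definition period_m :: "('a::metric_space \<Rightarrow> 'a) \<Rightarrow> 'a set \<Rightarrow> real \<Rightarrow> nat" where
  "period_m f C \<delta> = Gcd {k. \<exists>xi. chain_in f C \<delta> xi k \<and> xi 0 = xi k}"

definition sim_delta :: "('a::metric_space \<Rightarrow> 'a) \<Rightarrow> 'a set \<Rightarrow> real \<Rightarrow> 'a \<Rightarrow> 'a \<Rightarrow> bool" where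
  "sim_delta f C \<delta> x y \<longleftrightarrow>
     (\<exists>xi k. chain_in f C \<delta> xi k \<and> xi 0 = x \<and> xi k = y \<and> period_m f C \<delta> dvd k)"

definition classes_delta :: "('a::metric_space \<Rightarrow> 'a) \<Rightarrow> 'a set \<Rightarrow> real \<Rightarrow> 'a set set" where
  "classes_delta f C \<delta> = {E. \<exists>x\<in>C. E = {y\<in>C. sim_delta f C \<delta> x y}}"

definition sim_C :: "('a::metric_space \<Rightarrow> 'a) \<Rightarrow> 'a set \<Rightarrow> 'a \<Rightarrow> 'a \<Rightarrow> bool" where
  "sim_C f C x y \<longleftrightarrow> (\<forall>\<delta>>0. sim_delta f C \<delta> x y)"

definition classes_C :: "('a::metric_space \<Rightarrow> 'a) \<Rightarrow> 'a set \<Rightarrow> 'a set set" where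
  "classes_C f C = {D. \<exists>x\<in>C. D = {y\<in>C. sim_C f C x y}}"

definition D_delta :: "('a::metric_space \<Rightarrow> 'a) \<Rightarrow> 'a set \<Rightarrow> real \<Rightarrow> 'a set \<Rightarrow> 'a set" where
  "D_delta f C \<delta> D = (THE E. E \<in> classes_delta f C \<delta> \<and> D \<subseteq> E)"

definition Ws :: "('a::metric_space \<Rightarrow> 'a) \<Rightarrow> 'a set \<Rightarrow> 'a set" where
  "Ws f C = {x. (\<lambda>i. infdist ((f ^^ i) x) C) \<longlonglongrightarrow> 0}"

definition Vs :: "('a::metric_space \<Rightarrow> 'a) \<Rightarrow> 'a set \<Rightarrow> 'a set \<Rightarrow> 'a set" where
  "Vs f C D = (\<Inter>\<delta>\<in>{\<delta>::real. \<delta> > 0}.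
      {x\<in>Ws f C. (\<lambda>i. infdist ((f ^^ i) x) ((f ^^ i) ` D_delta f C \<delta> D)) \<longlonglongrightarrow> 0})"

definition s_limit_shadowing :: "('a::metric_space \<Rightarrow> 'a) \<Rightarrow> bool" where
  "s_limit_shadowing f \<longleftrightarrow>
     (\<forall>\<epsilon>>0. \<exists>\<delta>>0. \<forall>xi::nat \<Rightarrow> 'a.
        ((\<forall>i. dist (f (xi i)) (xi (Suc i)) \<le> \<delta>) \<and> (\<lambda>i. dist (f (xi i)) (xi (Suc i))) \<longlonglongrightarrow> 0)
        \<longrightarrow> (\<exists>x. (\<forall>i. dist ((f ^^ i) x) (xi i) \<le> \<epsilon>) \<and> (\<lambda>i. dist ((f ^^ i) x) (xi i)) \<longlonglongrightarrow> 0))"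

definition furstenberg_family :: "nat set set \<Rightarrow> bool" where
  "furstenberg_family F \<longleftrightarrow> F \<noteq> {} \<and> F \<noteq> UNIV \<and> (\<forall>A B. A \<in> F \<and> A \<subseteq> B \<longrightarrow> B \<in> F)"

definition full_family :: "nat set set \<Rightarrow> bool" where
  "full_family F \<longleftrightarrow> furstenberg_family F \<and> (\<forall>A\<in>F. \<forall>n. {i\<in>A. i \<ge> n} \<in> F)"

definition T_set :: "('a::metric_space \<Rightarrow> 'a) \<Rightarrow> nat \<Rightarrow> (nat \<Rightarrow> 'a) \<Rightarrow> real \<Rightarrow> nat set" where
  "T_set f n x r = {i. Max {dist ((f ^^ i) (x j)) ((f ^^ i) (x k)) | j k. j < k \<and> k < n} < r}"

text \<open>Dense subset of a finite product S^n (product topology, indices 0..n-1).\<close>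
definition dense_in_tuples :: "nat \<Rightarrow> (nat \<Rightarrow> 'a::metric_space) set \<Rightarrow> (nat \<Rightarrow> 'a) set \<Rightarrow> bool" where
  "dense_in_tuples n B S \<longleftrightarrow> B \<subseteq> S \<and> (\<forall>x\<in>S. \<forall>e>0. \<exists>y\<in>B. \<forall>i<n. dist (x i) (y i) < e)"

end

theory Submission
  imports Defs
begin


definition cpath :: "('a::metric_space \<Rightarrow> 'a) \<Rightarrow> 'a set \<Rightarrow> real \<Rightarrow> (nat \<Rightarrow> 'a) \<Rightarrow> nat \<Rightarrow> bool" where
  "cpath f C \<delta> xi k \<longleftrightarrow> (\<forall>i<k. dist (f (xi i)) (xi (Suc i)) \<le> \<delta>) \<and> (\<forall>i\<le>k. xi i \<in> C)"

definition reach :: "('a::metric_space \<Rightarrow> 'a) \<Rightarrow> 'a set \<Rightarrow> real \<Rightarrow> 'a \<Rightarrow> 'a \<Rightarrow> nat \<Rightarrow> bool" where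
  "reach f C \<delta> x y k \<longleftrightarrow> (\<exists>xi. cpath f C \<delta> xi k \<and> xi 0 = x \<and> xi k = y)"

lemma chain_to_iff: "chain_to f x y \<longleftrightarrow> (\<forall>\<delta>>0. \<exists>k\<ge>1. reach f UNIV \<delta> x y k)"
  unfolding chain_to_def reach_def cpath_def is_chain_def by (auto; blast)

lemma sim_delta_iff: "sim_delta f C \<delta> x y \<longleftrightarrow> (\<exists>k\<ge>1. reach f C \<delta> x y k \<and> period_m f C \<delta> dvd k)"
  unfolding sim_delta_def reach_def cpath_def chain_in_def is_chain_def by blast

lemma cycle_dvd: "reach f C \<delta> x x k \<Longrightarrow> k \<ge> 1 \<Longrightarrow> period_m f C \<delta> dvd k"
  unfolding period_m_def
  apply (rule Gcd_dvd)
  unfolding reach_def cpath_def chain_in_def is_chain_def by auto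

lemma reach_in: "reach f C \<delta> x y k \<Longrightarrow> x \<in> C \<and> y \<in> C"
  unfolding reach_def cpath_def by auto

lemma reach_0: "reach f C \<delta> x y 0 \<longleftrightarrow> x = y \<and> x \<in> C"
  unfolding reach_def cpath_def by auto

lemma reach_mono: "reach f C \<delta> x y k \<Longrightarrow> \<delta> \<le> \<delta>' \<Longrightarrow> C \<subseteq> C' \<Longrightarrow> reach f C' \<delta>' x y k"
  unfolding reach_def cpath_def by (metis order_trans subsetD)

lemma reach_trans:
  assumes "reach f C \<delta> x y k" "reach f C \<delta> y z l"
  shows "reach f C \<delta> x z (k + l)"
proof -
  obtain xi where xi: "cpath f C \<delta> xi k" "xi 0 = x" "xi k = y" using assms(1) reach_def by metis
  obtain yi where yi: "cpath f C \<delta> yi l" "yi 0 = y" "yi l = z" using assms(2) reach_def by metis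
  define zi where "zi = (\<lambda>i. if i \<le> k then xi i else yi (i - k))"
  have "cpath f C \<delta> zi (k + l)"
    unfolding cpath_def
  proof safe
    fix i assume i: "i < k + l"
    show "dist (f (zi i)) (zi (Suc i)) \<le> \<delta>"
    proof (cases "i < k")
      case True then show ?thesis using xi(1) unfolding cpath_def zi_def by auto
    next
      case False
      then have "zi i = yi (i - k)" "zi (Suc i) = yi (Suc (i - k))" "i - k < l"
        using i xi(3) yi(2) unfolding zi_def by (auto simp: Suc_diff_le)
      then show ?thesis using yi(1) unfolding cpath_def by auto
    qed
  next
    fix i assume "i \<le> k + l"
    then show "zi i \<in> C" using xi(1) yi(1) unfolding cpath_def zi_def by auto
  qed
  moreover have "zi 0 = x" "zi (k + l) = z" using xi yi unfolding zi_def by auto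
  ultimately show ?thesis unfolding reach_def by blast
qed

lemma reach_last:
  assumes "reach f C \<delta> x y k" "k \<ge> 1" "z \<in> C" "dist y z \<le> e"
  shows "reach f C (\<delta> + e) x z k"
proof -
  obtain xi where xi: "cpath f C \<delta> xi k" "xi 0 = x" "xi k = y" using assms(1) reach_def by metis
  define zi where "zi = xi(k := z)"
  have "cpath f C (\<delta> + e) zi k"
    unfolding cpath_def
  proof safe
    fix i assume i: "i < k"
    show "dist (f (zi i)) (zi (Suc i)) \<le> \<delta> + e"
    proof (cases "Suc i = k")
      case True
      have "dist (f (xi i)) z \<le> dist (f (xi i)) (xi k) + dist (xi k) z" by (rule dist_triangle)
      also have "\<dots> \<le> \<delta> + e" using xi(1) i True assms(4) xi(3) unfolding cpath_def by (metis add_mono)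
      finally show ?thesis using True i unfolding zi_def by auto
    next
      case False
      then show ?thesis using xi(1) i assms(4) unfolding cpath_def zi_def
        by (smt (verit, best) dist_commute dist_self dist_triangle fun_upd_other less_SucI nat_neq_iff zero_le_dist)
    qed
  next
    fix i assume "i \<le> k" then show "zi i \<in> C" using xi(1) assms(3) unfolding cpath_def zi_def by auto
  qed
  moreover have "zi 0 = x" "zi k = z" using xi assms(2) unfolding zi_def by auto
  ultimately show ?thesis unfolding reach_def by blast
qed

lemma reach_first:
  assumes "reach f C \<delta> x y k" "k \<ge> 1" "x' \<in> C" "dist (f x') (f x) \<le> e"
  shows "reach f C (\<delta> + e) x' y k"
proof -
  obtain xi where xi: "cpath f C \<delta> xi k" "xi 0 = x" "xi k = y" using assms(1) reach_def by metis
  define zi where "zi = xi(0 := x')"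
  have "cpath f C (\<delta> + e) zi k"
    unfolding cpath_def
  proof safe
    fix i assume i: "i < k"
    show "dist (f (zi i)) (zi (Suc i)) \<le> \<delta> + e"
    proof (cases "i = 0")
      case True
      have "dist (f x') (xi (Suc 0)) \<le> dist (f x') (f (xi 0)) + dist (f (xi 0)) (xi (Suc 0))" by (rule dist_triangle)
      also have "\<dots> \<le> e + \<delta>" using xi(1) i True assms(4) xi(2) unfolding cpath_def by (metis add_mono)
      finally show ?thesis using True i unfolding zi_def by auto
    next
      case False
      then show ?thesis using xi(1) i assms(4) unfolding cpath_def zi_def
        by (smt (verit, best) fun_upd_other nat.distinct(1) dist_triangle zero_le_dist dist_self dist_commute)
    qed
  next
    fix i assume "i \<le> k" then show "zi i \<in> C" using xi(1) assms(3) unfolding cpath_def zi_def by auto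
  qed
  moreover have "zi 0 = x'" "zi k = y" using xi assms(2) unfolding zi_def by auto
  ultimately show ?thesis unfolding reach_def by blast
qed

lemma reach_orbit:
  assumes "\<And>i. i \<le> k \<Longrightarrow> (f ^^ i) x \<in> C" "\<delta> \<ge> 0"
  shows "reach f C \<delta> x ((f ^^ k) x) k"
  unfolding reach_def cpath_def using assms
  by (intro exI[of _ "\<lambda>i. (f ^^ i) x"]) auto

lemma reach_split:
  assumes "cpath f C \<delta> xi k" "i \<le> k"
  shows "reach f C \<delta> (xi 0) (xi i) i" "reach f C \<delta> (xi i) (xi k) (k - i)"
proof -
  show "reach f C \<delta> (xi 0) (xi i) i"
    unfolding reach_def using assms unfolding cpath_def by (intro exI[of _ xi]) auto
  show "reach f C \<delta> (xi i) (xi k) (k - i)"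
    unfolding reach_def using assms unfolding cpath_def
    by (intro exI[of _ "\<lambda>j. xi (j + i)"]) auto
qed



lemma ct_trans: "chain_to f x y \<Longrightarrow> chain_to f y z \<Longrightarrow> chain_to f x z"
  unfolding chain_to_iff by (meson reach_trans trans_le_add1)

lemma reach_mono_ex: "(\<exists>k\<ge>1. reach f C \<gamma> x y k) \<Longrightarrow> \<gamma> < \<delta> \<Longrightarrow> (\<exists>k\<ge>1. reach f C \<delta> x y k)"
  by (meson less_imp_le order_refl reach_mono)

locale cdyn =
  fixes f :: "'a::metric_space \<Rightarrow> 'a" and C :: "'a set" and x0 :: 'a
  assumes cpt: "compact (UNIV::'a set)" and cont: "continuous_on UNIV f"
    and x0: "x0 \<in> CR f" and Cdef: "C = {y \<in> CR f. chain_to f x0 y \<and> chain_to f y x0}"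
begin

lemma uc: "e > 0 \<Longrightarrow> \<exists>d>0. \<forall>u v. dist u v < d \<longrightarrow> dist (f u) (f v) < e"
  using compact_uniformly_continuous[OF cont cpt] unfolding uniformly_continuous_on_def
  by (metis UNIV_I)

lemma contf: "isCont f y"
  using cont continuous_on_eq_continuous_at open_UNIV by blast

lemma L1:
  assumes "p \<longlonglongrightarrow> y" "\<forall>\<delta>>0. eventually (\<lambda>i. \<exists>k\<ge>1. reach f UNIV \<delta> x (p i) k) sequentially"
  shows "chain_to f x y"
  unfolding chain_to_iff
proof (intro allI impI)
  fix \<delta> :: real assume \<delta>: "\<delta> > 0"
  have "eventually (\<lambda>i. \<exists>k\<ge>1. reach f UNIV (\<delta>/2) x (p i) k) sequentially" using assms(2) \<delta> by simp
  moreover have "eventually (\<lambda>i. dist (p i) y < \<delta>/2) sequentially"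
    using assms(1) \<delta> by (intro tendstoD) auto
  ultimately have "eventually (\<lambda>i. (\<exists>k\<ge>1. reach f UNIV (\<delta>/2) x (p i) k) \<and> dist (p i) y < \<delta>/2) sequentially"
    by (rule eventually_conj)
  then obtain N where "\<forall>i\<ge>N. (\<exists>k\<ge>1. reach f UNIV (\<delta>/2) x (p i) k) \<and> dist (p i) y < \<delta>/2"
    unfolding eventually_sequentially by blast
  then obtain i where i: "\<exists>k\<ge>1. reach f UNIV (\<delta>/2) x (p i) k" "dist (p i) y < \<delta>/2"
    by blast
  then obtain k where k: "k \<ge> 1" "reach f UNIV (\<delta>/2) x (p i) k" by blast
  have "reach f UNIV (\<delta>/2 + \<delta>/2) x y k"
    by (rule reach_last[OF k(2) k(1)]) (use i in auto)
  then show "\<exists>k\<ge>1. reach f UNIV \<delta> x y k" using k(1) by auto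
qed

lemma L2:
  assumes "p \<longlonglongrightarrow> y" "\<forall>\<delta>>0. eventually (\<lambda>i. \<exists>k\<ge>1. reach f UNIV \<delta> (p i) x k) sequentially"
  shows "chain_to f y x"
  unfolding chain_to_iff
proof (intro allI impI)
  fix \<delta> :: real assume \<delta>: "\<delta> > 0"
  have fp: "(\<lambda>i. f (p i)) \<longlonglongrightarrow> f y" using isCont_tendsto_compose[OF contf assms(1)] .
  have "eventually (\<lambda>i. \<exists>k\<ge>1. reach f UNIV (\<delta>/2) (p i) x k) sequentially" using assms(2) \<delta> by simp
  moreover have "eventually (\<lambda>i. dist (f (p i)) (f y) < \<delta>/2) sequentially"
    using fp \<delta> by (intro tendstoD) auto
  ultimately have "eventually (\<lambda>i. (\<exists>k\<ge>1. reach f UNIV (\<delta>/2) (p i) x k) \<and> dist (f (p i)) (f y) < \<delta>/2) sequentially"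
    by (rule eventually_conj)
  then obtain N where "\<forall>i\<ge>N. (\<exists>k\<ge>1. reach f UNIV (\<delta>/2) (p i) x k) \<and> dist (f (p i)) (f y) < \<delta>/2"
    unfolding eventually_sequentially by blast
  then obtain i where i: "\<exists>k\<ge>1. reach f UNIV (\<delta>/2) (p i) x k" "dist (f (p i)) (f y) < \<delta>/2"
    by blast
  then obtain k where k: "k \<ge> 1" "reach f UNIV (\<delta>/2) (p i) x k" by blast
  have "reach f UNIV (\<delta>/2 + \<delta>/2) y x k"
    by (rule reach_first[OF k(2) k(1)]) (use i in \<open>auto simp: dist_commute\<close>)
  then show "\<exists>k\<ge>1. reach f UNIV \<delta> y x k" using k(1) by auto
qed

lemma inC: "chain_to f x0 p \<Longrightarrow> chain_to f p x0 \<Longrightarrow> p \<in> C"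
  unfolding Cdef CR_def using ct_trans[of f p x0 p] by simp

lemma inC': "a \<in> C \<Longrightarrow> chain_to f a p \<Longrightarrow> chain_to f p a \<Longrightarrow> p \<in> C"
  using inC ct_trans[of f x0 a p] ct_trans[of f p a x0] unfolding Cdef by simp

lemma C_ct: "a \<in> C \<Longrightarrow> b \<in> C \<Longrightarrow> chain_to f a b"
  unfolding Cdef using ct_trans[of f a x0 b] by simp

lemma C_closed: "closed C"
  unfolding closed_sequential_limits
proof (intro allI impI, elim conjE)
  fix x l assume x: "\<forall>n. x n \<in> C" and l: "x \<longlonglongrightarrow> l"
  have "chain_to f x0 l"
    by (rule L1[OF l]) (use x in \<open>auto simp: Cdef chain_to_iff\<close>)
  moreover have "chain_to f l x0"
    by (rule L2[OF l]) (use x in \<open>auto simp: Cdef chain_to_iff\<close>)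
  ultimately show "l \<in> C" by (rule inC)
qed

lemma fC: assumes "y \<in> C" shows "f y \<in> C"
proof -
  have yy: "chain_to f y y" using assms unfolding Cdef CR_def by auto
  have "chain_to f (f y) y"
    unfolding chain_to_iff
  proof (intro allI impI)
    fix \<delta> :: real assume \<delta>: "\<delta> > 0"
    obtain d where d: "d > 0" "\<forall>u v. dist u v < d \<longrightarrow> dist (f u) (f v) < \<delta>/2"
      using uc[of "\<delta>/2"] \<delta> by auto
    define \<delta>' where "\<delta>' = min (\<delta>/2) (d/2)"
    have \<delta>': "\<delta>' > 0" "\<delta>' \<le> \<delta>/2" "\<delta>' < d" using \<delta> d unfolding \<delta>'_def by auto
    obtain k where k: "k \<ge> 1" "reach f UNIV \<delta>' y y k" using yy \<delta>' unfolding chain_to_iff by blast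
    have "reach f UNIV \<delta>' y y (k + k)" using reach_trans[OF k(2) k(2)] .
    then obtain xi where xi: "cpath f UNIV \<delta>' xi (k + k)" "xi 0 = y" "xi (k + k) = y"
      unfolding reach_def by blast
    have r: "reach f UNIV \<delta>' (xi 1) y (k + k - 1)"
      using reach_split(2)[OF xi(1), of 1] k(1) xi(3) by auto
    have "dist (f (xi 0)) (xi (Suc 0)) \<le> \<delta>'" using xi(1) k(1) unfolding cpath_def by auto
    then have "dist (f (f y)) (f (xi 1)) < \<delta>/2" using d(2) \<delta>' xi(2) by auto
    then have "reach f UNIV (\<delta>' + \<delta>/2) (f y) y (k + k - 1)"
      by (intro reach_first[OF r]) (use k in auto)
    then have "reach f UNIV \<delta> (f y) y (k + k - 1)"
      by (rule reach_mono) (use \<delta>' in auto)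
    then show "\<exists>k\<ge>1. reach f UNIV \<delta> (f y) y k" using k(1) by (intro exI[of _ "k + k - 1"]) auto
  qed
  moreover have "chain_to f y (f y)"
    unfolding chain_to_iff using reach_orbit[of 1 f y UNIV] by (intro allI impI exI[of _ 1]) auto
  ultimately show ?thesis using inC' assms by blast
qed

lemma orbitC: "y \<in> C \<Longrightarrow> (f ^^ i) y \<in> C"
  by (induction i) (auto simp: fC)

lemma reach_orbitC: "y \<in> C \<Longrightarrow> \<delta> \<ge> 0 \<Longrightarrow> reach f C \<delta> y ((f ^^ k) y) k"
  by (rule reach_orbit) (auto simp: orbitC)

lemma Aprime:
  assumes a: "a \<in> C" and \<eta>: "\<eta> > 0"
  shows "\<exists>\<gamma>>0. \<forall>p. (\<exists>k\<ge>1. reach f UNIV \<gamma> a p k) \<and> (\<exists>k\<ge>1. reach f UNIV \<gamma> p a k) \<longrightarrow> (\<exists>c\<in>C. dist p c < \<eta>)"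
proof (rule ccontr)
  assume "\<not> ?thesis"
  then have H: "\<forall>\<gamma>>0. \<exists>p. (\<exists>k\<ge>1. reach f UNIV \<gamma> a p k) \<and>
      (\<exists>k\<ge>1. reach f UNIV \<gamma> p a k) \<and> (\<forall>c\<in>C. \<not> dist p c < \<eta>)"
    by blast
  have "\<forall>i. \<exists>p. (\<exists>k\<ge>1. reach f UNIV (inverse (real (Suc i))) a p k) \<and>
      (\<exists>k\<ge>1. reach f UNIV (inverse (real (Suc i))) p a k) \<and> (\<forall>c\<in>C. \<not> dist p c < \<eta>)"
  proof
    fix i
    have "inverse (real (Suc i)) > 0" by simp
    then show "\<exists>p. (\<exists>k\<ge>1. reach f UNIV (inverse (real (Suc i))) a p k) \<and>
      (\<exists>k\<ge>1. reach f UNIV (inverse (real (Suc i))) p a k) \<and> (\<forall>c\<in>C. \<not> dist p c < \<eta>)"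
      using H by blast
  qed
  then obtain p where p: "\<And>i. (\<exists>k\<ge>1. reach f UNIV (inverse (real (Suc i))) a (p i) k)"
     "\<And>i. (\<exists>k\<ge>1. reach f UNIV (inverse (real (Suc i))) (p i) a k)"
     "\<And>i. \<forall>c\<in>C. \<not> dist (p i) c < \<eta>"
    by metis
  obtain l r where lr: "strict_mono r" "(p \<circ> r) \<longlonglongrightarrow> l"
    using seq_compactE[OF compact_imp_seq_compact[OF cpt], of p] by blast
  have ev: "eventually (\<lambda>i. inverse (real (Suc (r i))) < \<delta>) sequentially" if "\<delta> > 0" for \<delta> :: real
  proof -
    have "((\<lambda>n. inverse (real (Suc n))) \<circ> r) \<longlonglongrightarrow> 0"
      using LIMSEQ_subseq_LIMSEQ[OF LIMSEQ_inverse_real_of_nat lr(1)] .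
    then show ?thesis using that by (auto dest: order_tendstoD(2))
  qed
  have "chain_to f a l"
  proof (rule L1[OF lr(2)], intro allI impI)
    fix \<delta> :: real assume "\<delta> > 0"
    show "eventually (\<lambda>i. \<exists>k\<ge>1. reach f UNIV \<delta> a ((p \<circ> r) i) k) sequentially"
      using ev[OF \<open>\<delta> > 0\<close>] by eventually_elim (metis p(1) reach_mono_ex comp_apply)
  qed
  moreover have "chain_to f l a"
  proof (rule L2[OF lr(2)], intro allI impI)
    fix \<delta> :: real assume "\<delta> > 0"
    show "eventually (\<lambda>i. \<exists>k\<ge>1. reach f UNIV \<delta> ((p \<circ> r) i) a k) sequentially"
      using ev[OF \<open>\<delta> > 0\<close>] by eventually_elim (metis p(2) reach_mono_ex comp_apply)
  qed
  ultimately have "l \<in> C" using inC' a by blast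
  have "eventually (\<lambda>i. dist ((p \<circ> r) i) l < \<eta>) sequentially"
    using tendstoD[OF lr(2) \<eta>] .
  then obtain N where "\<forall>i\<ge>N. dist ((p \<circ> r) i) l < \<eta>"
    unfolding eventually_sequentially by blast
  then have "dist (p (r N)) l < \<eta>" by simp
  with p(3)[of "r N"] \<open>l \<in> C\<close> show False by blast
qed

end


context cdyn begin

lemma chainC:
  assumes a: "a \<in> C" and b: "b \<in> C" and \<delta>: "\<delta> > 0"
  shows "\<exists>k\<ge>1. reach f C \<delta> a b k"
proof -
  obtain \<eta>0 where \<eta>0: "\<eta>0 > 0" "\<forall>u v. dist u v < \<eta>0 \<longrightarrow> dist (f u) (f v) < \<delta>/3"
    using uc[of "\<delta>/3"] \<delta> by auto
  define \<eta> where "\<eta> = min \<eta>0 (\<delta>/3)"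
  have \<eta>: "\<eta> > 0" "\<eta> \<le> \<eta>0" "\<eta> \<le> \<delta>/3" using \<eta>0 \<delta> by (auto simp: \<eta>_def)
  obtain \<gamma> where \<gamma>: "\<gamma> > 0"
    "\<forall>p. (\<exists>k\<ge>1. reach f UNIV \<gamma> a p k) \<and> (\<exists>k\<ge>1. reach f UNIV \<gamma> p a k) \<longrightarrow> (\<exists>c\<in>C. dist p c < \<eta>)"
    using Aprime[OF a \<eta>(1)] by blast
  define \<gamma>' where "\<gamma>' = min \<gamma> (\<delta>/3)"
  have \<gamma>': "\<gamma>' > 0" "\<gamma>' \<le> \<gamma>" "\<gamma>' \<le> \<delta>/3" using \<gamma> \<delta> by (auto simp: \<gamma>'_def)
  obtain K where K: "K \<ge> 1" "reach f UNIV \<gamma>' a b K"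
    using C_ct[OF a b] \<gamma>'(1) unfolding chain_to_iff by blast
  obtain K2 where K2: "K2 \<ge> 1" "reach f UNIV \<gamma>' b a K2"
    using C_ct[OF b a] \<gamma>'(1) unfolding chain_to_iff by blast
  obtain xi where xi: "cpath f UNIV \<gamma>' xi K" "xi 0 = a" "xi K = b"
    using K(2) unfolding reach_def by blast
  have near: "\<exists>c\<in>C. dist (xi i) c < \<eta>" if i: "0 < i" "i < K" for i
  proof -
    have r1: "reach f UNIV \<gamma>' a (xi i) i" using reach_split(1)[OF xi(1), of i] i xi(2) by auto
    have r2: "reach f UNIV \<gamma>' (xi i) b (K - i)" using reach_split(2)[OF xi(1), of i] i xi(3) by auto
    have r3: "reach f UNIV \<gamma>' (xi i) a (K - i + K2)" using reach_trans[OF r2 K2(2)] .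
    have "reach f UNIV \<gamma> a (xi i) i" using reach_mono[OF r1 \<gamma>'(2)] by simp
    then have e1: "\<exists>k\<ge>1. reach f UNIV \<gamma> a (xi i) k" using i(1) by (intro exI[of _ i]) auto
    have "reach f UNIV \<gamma> (xi i) a (K - i + K2)" using reach_mono[OF r3 \<gamma>'(2)] by simp
    then have e2: "\<exists>k\<ge>1. reach f UNIV \<gamma> (xi i) a k" using K2(1) by (intro exI[of _ "K - i + K2"]) auto
    show ?thesis using \<gamma>(2) e1 e2 by blast
  qed
  have "\<forall>i. \<exists>c. 0 < i \<and> i < K \<longrightarrow> c \<in> C \<and> dist (xi i) c < \<eta>" using near by blast
  then have "\<exists>cc. \<forall>i. 0 < i \<and> i < K \<longrightarrow> cc i \<in> C \<and> dist (xi i) (cc i) < \<eta>" by (rule choice)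
  then obtain cc where cc: "\<forall>i. 0 < i \<and> i < K \<longrightarrow> cc i \<in> C \<and> dist (xi i) (cc i) < \<eta>" by blast
  define ch where "ch i = (if i = 0 then a else if i = K then b else cc i)" for i
  have ch: "ch i \<in> C \<and> dist (xi i) (ch i) < \<eta>" if "i \<le> K" for i
    using cc that a b \<eta>(1) xi(2,3) unfolding ch_def by auto
  have "cpath f C \<delta> ch K"
    unfolding cpath_def
  proof safe
    fix i assume i: "i < K"
    have "dist (ch i) (xi i) < \<eta>0" using ch[of i] i \<eta>(2) by (simp add: dist_commute)
    then have d1: "dist (f (ch i)) (f (xi i)) < \<delta>/3" using \<eta>0(2) by blast
    have d2: "dist (f (xi i)) (xi (Suc i)) \<le> \<delta>/3" using xi(1) i \<gamma>'(3) unfolding cpath_def by force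
    have d3: "dist (xi (Suc i)) (ch (Suc i)) < \<delta>/3" using ch[of "Suc i"] i \<eta>(3) by simp
    have t1: "dist (f (ch i)) (ch (Suc i)) \<le> dist (f (ch i)) (f (xi i)) + dist (f (xi i)) (ch (Suc i))"
      by (rule dist_triangle)
    have t2: "dist (f (xi i)) (ch (Suc i)) \<le> dist (f (xi i)) (xi (Suc i)) + dist (xi (Suc i)) (ch (Suc i))"
      by (rule dist_triangle)
    show "dist (f (ch i)) (ch (Suc i)) \<le> \<delta>" using d1 d2 d3 t1 t2 by linarith
  next
    fix i assume "i \<le> K" then show "ch i \<in> C" using ch by blast
  qed
  moreover have "ch 0 = a" "ch K = b" using K(1) unfolding ch_def by auto
  ultimately show ?thesis using K(1) unfolding reach_def by blast
qed

lemma boundlen: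
  assumes c: "c \<in> C" and \<delta>: "\<delta> > 0"
  shows "\<exists>Lm. \<forall>q\<in>C. \<exists>l\<ge>1. l \<le> Lm \<and> reach f C \<delta> c q l"
proof (rule ccontr)
  assume "\<not> ?thesis"
  then have "\<forall>L. \<exists>q. q \<in> C \<and> (\<forall>l. 1 \<le> l \<longrightarrow> l \<le> L \<longrightarrow> \<not> reach f C \<delta> c q l)" by blast
  then obtain q where q: "\<And>L. q L \<in> C" "\<And>L l. 1 \<le> l \<Longrightarrow> l \<le> L \<Longrightarrow> \<not> reach f C \<delta> c (q L) l"
    by metis
  obtain l r where lr: "strict_mono r" "(q \<circ> r) \<longlonglongrightarrow> l"
    using seq_compactE[OF compact_imp_seq_compact[OF cpt], of q] by blast
  have "\<forall>x l. (\<forall>n. x n \<in> C) \<and> x \<longlonglongrightarrow> l \<longrightarrow> l \<in> C" using C_closed unfolding closed_sequential_limits .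
  then have lC: "l \<in> C" using lr(2) q(1) by (metis comp_apply)
  obtain l0 where l0: "l0 \<ge> 1" "reach f C (\<delta>/2) c l l0" using chainC[OF c lC, of "\<delta>/2"] \<delta> by auto
  have "eventually (\<lambda>i. dist ((q \<circ> r) i) l < \<delta>/2) sequentially"
    using tendstoD[OF lr(2), of "\<delta>/2"] \<delta> by linarith
  then obtain N where N: "\<forall>i\<ge>N. dist ((q \<circ> r) i) l < \<delta>/2" unfolding eventually_sequentially by blast
  define i where "i = max N l0"
  have "dist (q (r i)) l < \<delta>/2" using N i_def by simp
  then have "dist l (q (r i)) \<le> \<delta>/2" by (simp add: dist_commute)
  from reach_last[OF l0(2) l0(1) q(1) this] have "reach f C (\<delta>/2 + \<delta>/2) c (q (r i)) l0" .
  moreover have "l0 \<le> r i" using seq_suble[OF lr(1), of i] i_def by simp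
  ultimately show False using q(2)[of l0 "r i"] l0(1) by simp
qed

lemma semigroup:
  assumes c: "c \<in> C" and \<delta>: "\<delta> > 0"
  shows "\<exists>d T. d > 0 \<and> d dvd period_m f C \<delta> \<and> (\<forall>k\<ge>T. reach f C \<delta> c c (k * d))"
proof -
  define S where "S = {s. reach f C \<delta> c c s}"
  have S0: "0 \<in> S" using c by (simp add: S_def reach_0)
  have Sadd: "s + t \<in> S" if "s \<in> S" "t \<in> S" for s t using that reach_trans unfolding S_def by blast
  have Smul: "j * s \<in> S" if "s \<in> S" for j s
  proof (induction j)
    case 0 then show ?case using S0 by simp
  next
    case (Suc j) then show ?case using Sadd[OF that Suc] by simp
  qed
  obtain k0 where k0: "k0 \<ge> 1" "reach f C \<delta> c c k0" using chainC[OF c c \<delta>] by blast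
  define Dp where "Dp t \<longleftrightarrow> t > 0 \<and> (\<exists>s1\<in>S. \<exists>s2\<in>S. int t = int s1 - int s2)" for t :: nat
  have "Dp k0" using k0 S0 unfolding Dp_def S_def by force
  define d where "d = (LEAST t. Dp t)"
  have dD: "Dp d" unfolding d_def by (rule LeastI) (rule \<open>Dp k0\<close>)
  have dmin: "\<not> Dp t" if "t < d" for t using not_less_Least[of t Dp] that unfolding d_def by blast
  from dD obtain s1 s2 where s: "s1 \<in> S" "s2 \<in> S" "int d = int s1 - int s2" "d > 0"
    unfolding Dp_def by blast
  have s1eq: "s1 = s2 + d" using s(3) by linarith
  have dvdS: "d dvd s" if "s \<in> S" for s
  proof -
    define q where "q = s div d"
    define rr where "rr = s mod d"
    have sq: "s = q * d + rr" unfolding q_def rr_def by simp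
    have "rr < d" using s(4) unfolding rr_def by simp
    have "s + q * s2 = q * s1 + rr" using s1eq sq by (simp add: algebra_simps)
    then have "int rr = int (s + q * s2) - int (q * s1)" by simp
    moreover have "s + q * s2 \<in> S" "q * s1 \<in> S" using Sadd Smul that s by auto
    ultimately have "Dp rr" if "rr \<noteq> 0" using that unfolding Dp_def by blast
    then have "rr = 0" using dmin[OF \<open>rr < d\<close>] by blast
    then show ?thesis unfolding rr_def by auto
  qed
  have dm: "d dvd period_m f C \<delta>"
    unfolding period_m_def
  proof (rule Gcd_greatest)
    fix k assume "k \<in> {k. \<exists>xi. chain_in f C \<delta> xi k \<and> xi 0 = xi k}"
    then obtain xi where xi: "chain_in f C \<delta> xi k" "xi 0 = xi k" by blast
    then have rk: "reach f C \<delta> (xi 0) (xi 0) k"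
      unfolding chain_in_def is_chain_def reach_def cpath_def by metis
    have p: "xi 0 \<in> C" using reach_in rk by blast
    obtain l1 where l1: "reach f C \<delta> c (xi 0) l1" using chainC[OF c p \<delta>] by blast
    obtain l2 where l2: "reach f C \<delta> (xi 0) c l2" using chainC[OF p c \<delta>] by blast
    have "l1 + l2 \<in> S" using reach_trans[OF l1 l2] unfolding S_def by simp
    moreover have "l1 + k + l2 \<in> S" using reach_trans[OF reach_trans[OF l1 rk] l2] unfolding S_def by simp
    ultimately have "d dvd l1 + l2" "d dvd (l1 + l2) + k" using dvdS by (auto simp: algebra_simps)
    then show "d dvd k" using dvd_add_right_iff by blast
  qed
  define u where "u = s2 div d"
  have s2u: "s2 = u * d" using dvdS[OF s(2)] unfolding u_def by auto
  have s1u: "s1 = (u + 1) * d" using s1eq s2u by simp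
  have "\<forall>k \<ge> u * u. k * d \<in> S"
  proof (intro allI impI)
    fix k assume k: "u * u \<le> k"
    show "k * d \<in> S"
    proof (cases "u = 0")
      case True then have "s1 = 1 * d" using s1u by simp
      then show ?thesis using Smul[OF s(1), of k] by simp
    next
      case False
      define w where "w = k div u"
      define b where "b = k mod u"
      have kwb: "k = w * u + b" by (simp add: w_def b_def)
      have "b < u" using False by (simp add: b_def)
      have "u * u div u \<le> k div u" using k by (rule div_le_mono)
      then have "u \<le> w" using False unfolding w_def by simp
      then obtain v where v: "w = b + v" using \<open>b < u\<close> by (metis le_add_diff_inverse less_imp_le order_trans)
      have "k * d = v * s2 + b * s1" using kwb v s1u s2u by (simp add: algebra_simps)
      then show ?thesis using Sadd Smul s by auto
    qed
  qed
  then show ?thesis using s(4) dm unfolding S_def by blast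
qed

lemma exact_len:
  assumes c: "c \<in> C" and \<delta>: "\<delta> > 0"
  shows "\<exists>P0. \<forall>q L P. q \<in> C \<longrightarrow> reach f C \<delta> c q L \<longrightarrow> int (period_m f C \<delta>) dvd int P - int L
     \<longrightarrow> P \<ge> P0 \<longrightarrow> reach f C \<delta> c q P"
proof -
  obtain Lm where Lm: "\<forall>q\<in>C. \<exists>l\<ge>1. l \<le> Lm \<and> reach f C \<delta> c q l" using boundlen[OF c \<delta>] by blast
  obtain d T where dT: "d > 0" "d dvd period_m f C \<delta>" "\<forall>k\<ge>T. reach f C \<delta> c c (k*d)"
    using semigroup[OF c \<delta>] by blast
  let ?m = "period_m f C \<delta>"
  show ?thesis
  proof (intro exI[of _ "Lm + T * d"] allI impI)
    fix q L P assume q: "q \<in> C" and L: "reach f C \<delta> c q L" and PL: "int ?m dvd int P - int L"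
      and P: "Lm + T*d \<le> P"
    obtain l where l: "l \<ge> 1" "l \<le> Lm" "reach f C \<delta> c q l" using Lm q by blast
    obtain l' where l': "l' \<ge> 1" "reach f C \<delta> q c l'" using chainC[OF q c \<delta>] by blast
    have "?m dvd L + l'" using cycle_dvd[OF reach_trans[OF L l'(2)]] l'(1) by simp
    then have h1: "int ?m dvd int L + int l'" by (metis int_dvd_int_iff of_nat_add)
    have "?m dvd l + l'" using cycle_dvd[OF reach_trans[OF l(3) l'(2)]] l'(1) by simp
    then have h2: "int ?m dvd int l + int l'" by (metis int_dvd_int_iff of_nat_add)
    have "int P - int l = (int P - int L) + (int L + int l') - (int l + int l')" by simp
    then have "int ?m dvd int P - int l" using PL h1 h2 by (metis dvd_add dvd_diff)
    moreover have "l \<le> P" using P l(2) by simp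
    ultimately have "int ?m dvd int (P - l)" by (simp add: of_nat_diff)
    then have "?m dvd P - l" by (simp add: int_dvd_int_iff)
    then have "d dvd P - l" using dT(2) dvd_trans by blast
    then obtain k where k: "P - l = d * k" by (elim dvdE)
    have "T * d \<le> P - l" using P l(2) by simp
    then have "T * d \<le> k * d" using k by (simp add: mult.commute)
    then have "T \<le> k" using dT(1) by simp
    then have "reach f C \<delta> c c (k*d)" using dT(3) by blast
    from reach_trans[OF this l(3)] have "reach f C \<delta> c q (k*d + l)" .
    moreover have "k*d + l = P" using k \<open>l \<le> P\<close> by (simp add: mult.commute)
    ultimately show "reach f C \<delta> c q P" by simp
  qed
qed

end


lemma Vs_iff: "x \<in> Vs f C D \<longleftrightarrow> x \<in> Ws f C \<and>
   (\<forall>\<delta>>0. (\<lambda>i. infdist ((f ^^ i) x) ((f ^^ i) ` D_delta f C \<delta> D)) \<longlonglongrightarrow> 0)"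
  unfolding Vs_def by auto (meson zero_less_one)

lemma tend_infdist:
  assumes "(\<lambda>i. infdist (g i) (S i)) \<longlonglongrightarrow> 0" "(\<lambda>i. dist (h i) (g i)) \<longlonglongrightarrow> 0"
  shows "(\<lambda>i. infdist (h i) (S i)) \<longlonglongrightarrow> 0"
proof (rule tendsto_sandwich[of "\<lambda>i. 0" _ _ "\<lambda>i. infdist (g i) (S i) + dist (h i) (g i)"])
  show "\<forall>\<^sub>F i in sequentially. 0 \<le> infdist (h i) (S i)" by (simp add: infdist_nonneg)
  show "\<forall>\<^sub>F i in sequentially. infdist (h i) (S i) \<le> infdist (g i) (S i) + dist (h i) (g i)"
    by (simp add: infdist_triangle)
  show "(\<lambda>i. 0::real) \<longlonglongrightarrow> 0" by simp
  show "(\<lambda>i. infdist (g i) (S i) + dist (h i) (g i)) \<longlonglongrightarrow> 0" using tendsto_add[OF assms] by simp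
qed

lemma V_asym:
  assumes z: "z \<in> Vs f C D" and a: "(\<lambda>i. dist ((f ^^ i) y) ((f ^^ i) z)) \<longlonglongrightarrow> 0"
  shows "y \<in> Vs f C D"
proof -
  have "(\<lambda>i. infdist ((f ^^ i) y) C) \<longlonglongrightarrow> 0"
    using z a tend_infdist[of "\<lambda>i. (f ^^ i) z" "\<lambda>i. C" "\<lambda>i. (f ^^ i) y"] unfolding Vs_iff Ws_def by auto
  moreover have "(\<lambda>i. infdist ((f ^^ i) y) ((f ^^ i) ` D_delta f C \<delta> D)) \<longlonglongrightarrow> 0" if "\<delta> > 0" for \<delta>
    using z a that tend_infdist[of "\<lambda>i. (f ^^ i) z" "\<lambda>i. (f ^^ i) ` D_delta f C \<delta> D" "\<lambda>i. (f ^^ i) y"]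
    unfolding Vs_iff by auto
  ultimately show ?thesis unfolding Vs_iff Ws_def by auto
qed

lemma infdist_lessE:
  assumes "infdist p A < r" "A \<noteq> {}"
  shows "\<exists>a\<in>A. dist p a < r"
proof (rule ccontr)
  assume "\<not> ?thesis"
  then have "\<forall>a\<in>A. r \<le> dist p a" by auto
  then have "r \<le> infdist p A" unfolding infdist_notempty[OF assms(2)]
    by (intro cINF_greatest[OF assms(2)]) auto
  with assms(1) show False by simp
qed

lemma Tset_cofinite:
  fixes y :: "nat \<Rightarrow> 'a::metric_space"
  assumes n: "n \<ge> 2" and asym: "\<forall>j<n. (\<lambda>i. dist ((f ^^ i) (y j)) ((f ^^ i) z)) \<longlonglongrightarrow> 0" and \<epsilon>: "\<epsilon> > 0"
  shows "\<exists>N. \<forall>i\<ge>N. i \<in> T_set f n y \<epsilon>"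
proof -
  let ?P = "{(j,k). j < k \<and> k < n}"
  have fin: "finite ?P" by (rule finite_subset[of _ "{..<n} \<times> {..<n}"]) auto
  have "\<forall>p\<in>?P. eventually (\<lambda>i. dist ((f ^^ i) (y (fst p))) ((f ^^ i) (y (snd p))) < \<epsilon>) sequentially"
  proof
    fix p assume "p \<in> ?P"
    then obtain j k where p: "p = (j, k)" "j < k" "k < n" by blast
    have "(\<lambda>i. dist ((f ^^ i) (y j)) ((f ^^ i) z) + dist ((f ^^ i) (y k)) ((f ^^ i) z)) \<longlonglongrightarrow> 0 + 0"
      using p asym by (intro tendsto_add) auto
    then have "eventually (\<lambda>i. dist ((f ^^ i) (y j)) ((f ^^ i) z) + dist ((f ^^ i) (y k)) ((f ^^ i) z) < \<epsilon>) sequentially"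
      using \<epsilon> by (intro order_tendstoD(2)) auto
    then show "eventually (\<lambda>i. dist ((f ^^ i) (y (fst p))) ((f ^^ i) (y (snd p))) < \<epsilon>) sequentially"
      unfolding p(1) fst_conv snd_conv
      by eventually_elim (rule le_less_trans[OF dist_triangle2])
  qed
  then have "eventually (\<lambda>i. \<forall>p\<in>?P. dist ((f ^^ i) (y (fst p))) ((f ^^ i) (y (snd p))) < \<epsilon>) sequentially"
    by (rule eventually_ball_finite[OF fin])
  then obtain N where N: "\<forall>i\<ge>N. \<forall>p\<in>?P. dist ((f ^^ i) (y (fst p))) ((f ^^ i) (y (snd p))) < \<epsilon>"
    unfolding eventually_sequentially by blast
  show ?thesis
  proof (intro exI allI impI)
    fix i assume i: "N \<le> i"
    let ?S = "{dist ((f ^^ i) (y j)) ((f ^^ i) (y k)) | j k. j < k \<and> k < n}"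
    have Seq: "?S = (\<lambda>p. dist ((f ^^ i) (y (fst p))) ((f ^^ i) (y (snd p)))) ` ?P" by force
    have "finite ?S" unfolding Seq using fin by simp
    have "dist ((f ^^ i) (y 0)) ((f ^^ i) (y 1)) \<in> ?S" using n by force
    then have "?S \<noteq> {}" by blast
    moreover note \<open>finite ?S\<close>
    moreover have "\<forall>a\<in>?S. a < \<epsilon>" using N i unfolding Seq by auto
    ultimately have "Max ?S < \<epsilon>" by simp
    then show "i \<in> T_set f n y \<epsilon>" unfolding T_set_def by simp
  qed
qed

context cdyn begin

lemma sim_refl: "w \<in> C \<Longrightarrow> \<delta> > 0 \<Longrightarrow> sim_delta f C \<delta> w w"
  unfolding sim_delta_iff using chainC cycle_dvd by blast

lemma Dd_char:
  assumes w0: "w0 \<in> C" and D: "D = {y\<in>C. sim_C f C w0 y}" and \<delta>: "\<delta> > 0"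
  shows "D_delta f C \<delta> D = {y\<in>C. sim_delta f C \<delta> w0 y}"
proof -
  let ?E = "{y\<in>C. sim_delta f C \<delta> w0 y}"
  let ?m = "period_m f C \<delta>"
  have w0D: "w0 \<in> D" using D w0 sim_refl unfolding sim_C_def by auto
  have uniq: "E = ?E" if hE: "E \<in> classes_delta f C \<delta>" "D \<subseteq> E" for E
  proof -
    obtain w where w: "w \<in> C" "E = {y\<in>C. sim_delta f C \<delta> w y}"
      using hE(1) unfolding classes_delta_def by blast
    have "sim_delta f C \<delta> w w0" using hE(2) w0D w by blast
    then obtain s where s: "s \<ge> 1" "reach f C \<delta> w w0 s" "?m dvd s" unfolding sim_delta_iff by blast
    obtain l where l: "l \<ge> 1" "reach f C \<delta> w0 w l" using chainC[OF w0 w(1) \<delta>] by blast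
    have "?m dvd s + l" using cycle_dvd[OF reach_trans[OF s(2) l(2)]] s(1) by simp
    then have ml: "?m dvd l" using s(3) dvd_add_right_iff by blast
    show ?thesis
    proof (rule set_eqI, rule iffI)
      fix y assume "y \<in> E"
      then obtain k where k: "y \<in> C" "k \<ge> 1" "reach f C \<delta> w y k" "?m dvd k"
        using w(2) unfolding sim_delta_iff by blast
      have "reach f C \<delta> w0 y (l + k)" using reach_trans[OF l(2) k(3)] .
      moreover have "?m dvd l + k" using ml k(4) by simp
      ultimately show "y \<in> ?E" using k(1,2) unfolding sim_delta_iff
        by (intro CollectI conjI exI[of _ "l + k"]) auto
    next
      fix y assume "y \<in> ?E"
      then obtain k where k: "y \<in> C" "k \<ge> 1" "reach f C \<delta> w0 y k" "?m dvd k"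
        unfolding sim_delta_iff by blast
      have "reach f C \<delta> w y (s + k)" using reach_trans[OF s(2) k(3)] .
      moreover have "?m dvd s + k" using s(3) k(4) by simp
      ultimately have "sim_delta f C \<delta> w y" using k(2) unfolding sim_delta_iff
        by (intro exI[of _ "s + k"]) auto
      then show "y \<in> E" using k(1) w(2) by blast
    qed
  qed
  have ex: "?E \<in> classes_delta f C \<delta> \<and> D \<subseteq> ?E"
    using w0 D \<delta> unfolding classes_delta_def sim_C_def by auto
  show ?thesis unfolding D_delta_def
    by (rule the_equality) (use ex uniq in auto)
qed

end


context cdyn begin

lemma Klemma:
  assumes w0: "w0 \<in> C" and D: "D = {y\<in>C. sim_C f C w0 y}" and sh: "s_limit_shadowing f"
    and x: "x \<in> Vs f C D" and z: "z \<in> Vs f C D" and e: "e > 0"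
  shows "\<exists>y. dist x y < e \<and> (\<lambda>i. dist ((f ^^ i) y) ((f ^^ i) z)) \<longlonglongrightarrow> 0"
proof -
  obtain \<delta> where \<delta>: "\<delta> > 0" and shd: "\<forall>xi::nat \<Rightarrow> 'a.
        ((\<forall>i. dist (f (xi i)) (xi (Suc i)) \<le> \<delta>) \<and> (\<lambda>i. dist (f (xi i)) (xi (Suc i))) \<longlonglongrightarrow> 0)
        \<longrightarrow> (\<exists>x. (\<forall>i. dist ((f ^^ i) x) (xi i) \<le> e/2) \<and> (\<lambda>i. dist ((f ^^ i) x) (xi i)) \<longlonglongrightarrow> 0)"
    using sh e unfolding s_limit_shadowing_def by (meson half_gt_zero)
  define \<gamma> where "\<gamma> = \<delta>/2"
  have \<gamma>: "\<gamma> > 0" using \<delta> by (simp add: \<gamma>_def)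
  obtain \<eta>0 where \<eta>0: "\<eta>0 > 0" "\<forall>u v. dist u v < \<eta>0 \<longrightarrow> dist (f u) (f v) < \<delta>/2"
    using uc[of "\<delta>/2"] \<delta> by auto
  define \<eta> where "\<eta> = min \<eta>0 (\<delta>/2)"
  have \<eta>: "\<eta> > 0" "\<eta> \<le> \<eta>0" "\<eta> \<le> \<delta>/2" using \<eta>0 \<delta> by (auto simp: \<eta>_def)
  define E where "E = {y\<in>C. sim_delta f C \<gamma> w0 y}"
  have EE: "D_delta f C \<gamma> D = E" using Dd_char[OF w0 D \<gamma>] unfolding E_def by simp
  let ?m = "period_m f C \<gamma>"
  have w0E: "w0 \<in> E" using sim_refl w0 \<gamma> unfolding E_def by blast
  have xE: "(\<lambda>i. infdist ((f ^^ i) x) ((f ^^ i) ` E)) \<longlonglongrightarrow> 0" using x \<gamma> EE unfolding Vs_iff by auto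
  have zE: "(\<lambda>i. infdist ((f ^^ i) z) ((f ^^ i) ` E)) \<longlonglongrightarrow> 0" using z \<gamma> EE unfolding Vs_iff by auto
  have "eventually (\<lambda>i. infdist ((f ^^ i) x) ((f ^^ i) ` E) < \<eta>) sequentially"
    using order_tendstoD(2)[OF xE] \<eta>(1) by simp
  then obtain N where N: "infdist ((f ^^ N) x) ((f ^^ N) ` E) < \<eta>"
    unfolding eventually_sequentially by blast
  obtain a where a: "a \<in> E" "dist ((f ^^ N) x) ((f ^^ N) a) < \<eta>"
    using infdist_lessE[OF N] w0E by blast
  define c where "c = (f ^^ N) a"
  have aC: "a \<in> C" using a(1) unfolding E_def by blast
  have cC: "c \<in> C" using orbitC[OF aC] unfolding c_def .
  obtain P0 where P0: "\<forall>q L P. q \<in> C \<longrightarrow> reach f C \<gamma> c q L \<longrightarrow> int ?m dvd int P - int L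
     \<longrightarrow> P \<ge> P0 \<longrightarrow> reach f C \<gamma> c q P"
    using exact_len[OF cC \<gamma>] by blast
  have "eventually (\<lambda>i. infdist ((f ^^ i) z) ((f ^^ i) ` E) < \<eta>) sequentially"
    using order_tendstoD(2)[OF zE] \<eta>(1) by simp
  then obtain M0 where M0: "\<forall>i\<ge>M0. infdist ((f ^^ i) z) ((f ^^ i) ` E) < \<eta>"
    unfolding eventually_sequentially by blast
  define M where "M = M0 + N + P0 + 2"
  define P where "P = M0 + P0 + 2"
  have P: "P \<ge> P0" "P \<ge> 2" "M = N + P" unfolding M_def P_def by auto
  have "M0 \<le> M" unfolding M_def by simp
  then have "infdist ((f ^^ M) z) ((f ^^ M) ` E) < \<eta>" using M0 by blast
  then obtain b where b: "b \<in> E" "dist ((f ^^ M) z) ((f ^^ M) b) < \<eta>"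
    using infdist_lessE w0E by blast
  define q where "q = (f ^^ M) b"
  have bC: "b \<in> C" using b(1) unfolding E_def by blast
  have qC: "q \<in> C" using orbitC[OF bC] unfolding q_def .
  obtain sa where sa: "sa \<ge> 1" "reach f C \<gamma> w0 a sa" "?m dvd sa"
    using a(1) unfolding E_def sim_delta_iff by blast
  obtain sb where sb: "sb \<ge> 1" "reach f C \<gamma> w0 b sb" "?m dvd sb"
    using b(1) unfolding E_def sim_delta_iff by blast
  obtain l5 where l5: "l5 \<ge> 1" "reach f C \<gamma> c a l5" using chainC[OF cC aC \<gamma>] by blast
  obtain l9 where l9: "l9 \<ge> 1" "reach f C \<gamma> a w0 l9" using chainC[OF aC w0 \<gamma>] by blast
  have orb_a: "reach f C \<gamma> a c N" using reach_orbitC[OF aC] \<gamma> unfolding c_def by simp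
  have orb_b: "reach f C \<gamma> b q M" using reach_orbitC[OF bC] \<gamma> unfolding q_def by simp
  have m1: "?m dvd N + l5" using cycle_dvd[OF reach_trans[OF orb_a l5(2)]] l5(1) by simp
  have "?m dvd sa + l9" using cycle_dvd[OF reach_trans[OF sa(2) l9(2)]] sa(1) by simp
  then have m2: "?m dvd l9" using sa(3) dvd_add_right_iff by blast
  have chainL: "reach f C \<gamma> c q (l5 + l9 + sb + M)"
    using reach_trans[OF reach_trans[OF reach_trans[OF l5(2) l9(2)] sb(2)] orb_b] .
  have eq: "int P - int (l5 + l9 + sb + M) = - (int (N + l5) + int l9 + int sb)" using P(3) by simp
  have "int ?m dvd int (N + l5)" "int ?m dvd int l9" "int ?m dvd int sb"
    using m1 m2 sb(3) by (simp_all only: int_dvd_int_iff)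
  then have "int ?m dvd int P - int (l5 + l9 + sb + M)" unfolding eq
    by (intro dvd_minus_iff[THEN iffD2] dvd_add) auto
  then have "reach f C \<gamma> c q P" using P0 qC chainL P(1) by blast
  then obtain ch where ch: "cpath f C \<gamma> ch P" "ch 0 = c" "ch P = q" unfolding reach_def by blast
  define xi where "xi i = (if i \<le> N then (f ^^ i) x else if i < M then ch (i - N) else (f ^^ i) z)" for i
  have jumps: "dist (f (xi i)) (xi (Suc i)) \<le> \<delta>" for i
  proof -
    consider (A) "Suc i \<le> N" | (B) "i = N" | (Cc) "N < i" "Suc i < M" | (Dd) "Suc i = M" | (Ee) "M \<le> i"
      using P by linarith
    then show ?thesis
    proof cases
      case A
      then show ?thesis unfolding xi_def using \<delta> by simp
    next
      case B
      have x1: "xi i = (f ^^ N) x" using B unfolding xi_def by simp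
      have x2: "xi (Suc i) = ch 1" using B P unfolding xi_def by simp
      have "dist ((f ^^ N) x) c < \<eta>0" using a(2) \<eta>(2) unfolding c_def by simp
      then have d1: "dist (f ((f ^^ N) x)) (f c) < \<delta>/2" using \<eta>0(2) by blast
      have d2: "dist (f c) (ch 1) \<le> \<gamma>" using ch(1) ch(2) P(2) unfolding cpath_def
        by (metis One_nat_def less_le_trans one_le_numeral zero_less_one)
      have "dist (f ((f ^^ N) x)) (ch 1) \<le> dist (f ((f ^^ N) x)) (f c) + dist (f c) (ch 1)"
        by (rule dist_triangle)
      then have "dist (f ((f ^^ N) x)) (ch 1) \<le> \<delta>" using d1 d2 unfolding \<gamma>_def by linarith
      then show ?thesis using x1 x2 by simp
    next
      case Cc
      have x1: "xi i = ch (i - N)" using Cc unfolding xi_def by simp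
      have x2: "xi (Suc i) = ch (Suc (i - N))" using Cc unfolding xi_def by (simp add: Suc_diff_le)
      have "i - N < P" using Cc P by linarith
      then have "dist (f (ch (i - N))) (ch (Suc (i - N))) \<le> \<gamma>" using ch(1) unfolding cpath_def by blast
      then show ?thesis using x1 x2 \<delta> unfolding \<gamma>_def by simp
    next
      case Dd
      have iN: "i - N = P - 1" "N < i" using Dd P by linarith+
      have x1: "xi i = ch (P - 1)" using Dd iN unfolding xi_def by simp
      have x2: "xi (Suc i) = (f ^^ M) z" using Dd P unfolding xi_def by simp
      have "P - 1 < P" "Suc (P - 1) = P" using P by auto
      then have d1: "dist (f (ch (P - 1))) q \<le> \<gamma>" using ch(1) ch(3) unfolding cpath_def by metis
      have d2: "dist q ((f ^^ M) z) < \<eta>" using b(2) unfolding q_def by (simp add: dist_commute)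
      have "dist (f (ch (P - 1))) ((f ^^ M) z) \<le> dist (f (ch (P - 1))) q + dist q ((f ^^ M) z)"
        by (rule dist_triangle)
      then have "dist (f (ch (P - 1))) ((f ^^ M) z) \<le> \<delta>" using d1 d2 \<eta>(3) unfolding \<gamma>_def by linarith
      then show ?thesis using x1 x2 by simp
    next
      case Ee
      then have "xi i = (f ^^ i) z" "xi (Suc i) = (f ^^ Suc i) z" using P unfolding xi_def by auto
      then show ?thesis using \<delta> by simp
    qed
  qed
  have evz: "eventually (\<lambda>i. xi i = (f ^^ i) z) sequentially"
    unfolding eventually_sequentially xi_def using P by (intro exI[of _ M]) auto
  have "eventually (\<lambda>i. dist (f (xi i)) (xi (Suc i)) = 0) sequentially"
    unfolding eventually_sequentially xi_def using P by (intro exI[of _ M]) auto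
  then have lim: "(\<lambda>i. dist (f (xi i)) (xi (Suc i))) \<longlonglongrightarrow> 0" by (rule tendsto_eventually)
  obtain y where y: "\<forall>i. dist ((f ^^ i) y) (xi i) \<le> e/2" "(\<lambda>i. dist ((f ^^ i) y) (xi i)) \<longlonglongrightarrow> 0"
    using shd jumps lim by blast
  have "dist y x \<le> e/2" using y(1)[rule_format, of 0] unfolding xi_def by simp
  then have "dist x y < e" using e by (simp add: dist_commute)
  moreover have "(\<lambda>i. dist ((f ^^ i) y) ((f ^^ i) z)) \<longlonglongrightarrow> 0"
    using y(2) evz by (rule Lim_transform_eventually[OF _ eventually_mono]) auto
  ultimately show ?thesis by blast
qed

end

theorem theorem1p1:
  fixes f :: "'a::metric_space \<Rightarrow> 'a" and C D :: "'a set" and G :: "nat set set" and n :: nat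
  assumes "compact (UNIV :: 'a set)"
    and "continuous_on UNIV f"
    and "s_limit_shadowing f"
    and "C \<in> chain_components f"
    and "D \<in> classes_C f C"
    and "full_family G"
    and "n \<ge> 2"
  shows "dense_in_tuples n
           (\<Inter>\<epsilon>\<in>{\<epsilon>::real. \<epsilon> > 0}. {x \<in> {..<n} \<rightarrow>\<^sub>E Vs f C D. T_set f n x \<epsilon> \<in> G})
           ({..<n} \<rightarrow>\<^sub>E Vs f C D)"
proof -
  obtain x0 where x0: "x0 \<in> CR f" "C = {y\<in>CR f. chain_to f x0 y \<and> chain_to f y x0}"
    using assms(4) unfolding chain_components_def by blast
  interpret cdyn f C x0 using assms(1,2) x0 by unfold_locales auto
  obtain w0 where w0: "w0 \<in> C" "D = {y\<in>C. sim_C f C w0 y}"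
    using assms(5) unfolding classes_C_def by blast
  let ?V = "Vs f C D"
  let ?S = "{..<n} \<rightarrow>\<^sub>E ?V"
  let ?B = "\<Inter>\<epsilon>\<in>{\<epsilon>::real. \<epsilon> > 0}. {x \<in> ?S. T_set f n x \<epsilon> \<in> G}"
  have cof: "T \<in> G" if hT: "\<exists>N. \<forall>i\<ge>N. i \<in> T" for T
  proof -
    obtain N where N: "\<forall>i\<ge>N. i \<in> T" using hT by blast
    obtain A where A: "A \<in> G" using assms(6) unfolding full_family_def furstenberg_family_def by blast
    have "{i\<in>A. i \<ge> N} \<in> G" using A assms(6) unfolding full_family_def by blast
    moreover have "{i\<in>A. i \<ge> N} \<subseteq> T" using N by blast
    ultimately show ?thesis using assms(6) unfolding full_family_def furstenberg_family_def by blast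
  qed
  show ?thesis unfolding dense_in_tuples_def
  proof (intro conjI ballI allI impI)
    show "?B \<subseteq> ?S"
    proof
      fix x assume "x \<in> ?B"
      then have "x \<in> {x \<in> ?S. T_set f n x 1 \<in> G}" by (rule INT_D) simp
      then show "x \<in> ?S" by simp
    qed
  next
    fix x and e :: real assume x: "x \<in> ?S" and e: "e > 0"
    have xV: "x j \<in> ?V" if "j < n" for j using x that by (auto simp: PiE_iff)
    have z: "x 0 \<in> ?V" using xV assms(7) by simp
    have "\<forall>j. \<exists>yj. j < n \<longrightarrow> dist (x j) yj < e \<and> (\<lambda>i. dist ((f ^^ i) yj) ((f ^^ i) (x 0))) \<longlonglongrightarrow> 0"
      using Klemma[OF w0(1) w0(2) assms(3) xV z e] by blast
    then obtain g where g: "\<forall>j. j < n \<longrightarrow> dist (x j) (g j) < e \<and> (\<lambda>i. dist ((f ^^ i) (g j)) ((f ^^ i) (x 0))) \<longlonglongrightarrow> 0"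
      by metis
    define y where "y = (\<lambda>j. if j < n then g j else undefined)"
    have yS: "y \<in> ?S" unfolding y_def PiE_iff using g V_asym[OF z] by (auto simp: extensional_def)
    have yT: "T_set f n y \<epsilon> \<in> G" if "\<epsilon> > 0" for \<epsilon>
    proof (rule cof)
      show "\<exists>N. \<forall>i\<ge>N. i \<in> T_set f n y \<epsilon>"
        by (rule Tset_cofinite[OF assms(7) _ that]) (use g in \<open>auto simp: y_def\<close>)
    qed
    have "y \<in> ?B" using yS yT by blast
    moreover have "\<forall>i<n. dist (x i) (y i) < e" using g unfolding y_def by auto
    ultimately show "\<exists>y\<in>?B. \<forall>i<n. dist (x i) (y i) < e" by blast
  qed
qed


end
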